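(* Let $n,k,l\ge1$ and let $\mathbf P:\mathbb R^{n\times k}\to\mathbb R^{n\times l}$ be a permutation equivariant polynomial map. Then $$\mathbf P(\mathbf X)=\sum_{\alpha\in\mathbb N^k,\ |\alpha|\le n}\mathbf b_\alpha\,\mathbf q_\alpha^T,$$ where $\mathbf b_\alpha=(\mathbf x_1^\alpha,\dots,\mathbf x_n^\alpha)^T\in\mathbb R^n$ and $\mathbf q_\alpha=(q_{\alpha,1},\dots,q_{\alpha,l})^T$ with each $q_{\alpha,j}=q_{\alpha,j}(s_1(\mathbf X),\dots,s_t(\mathbf X))$ a polynomial in the $t=\binom{n+k}{k}$ power-sum multi-symmetric polynomials $s_1,\dots,s_t$. Conversely, every polynomial map $\mathbf P$ of this form is permutation equivariant.
   Context: $\mathbf X=(\mathbf x_1,\dots,\mathbf x_n)^T\in\mathbb R^{n\times k}$ with rows $\mathbf x_i\in\mathbb R^k$; $S_n$ acts by $\sigma\cdot\mathbf X=(\mathbf x_{\sigma^{-1}(1)},\dots,\mathbf x_{\sigma^{-1}(n)})^T$, and $\mathbf P$ is permutation equivariant if $\mathbf P(\sigma\cdot\mathbf X)=\sigma\cdot\mathbf P(\mathbf X)$ for all $\sigma\in S_n$. For $\mathbf x\in\mathbb R^k$ and a multi-index $\alpha=(\alpha_1,\dots,\alpha_k)\in\mathbb N^k$, $\mathbf x^\alpha=x_1^{\alpha_1}\cdots x_k^{\alpha_k}$ and $|\alpha|=\sum_i\alpha_i$. Let $\alpha_1,\dots,\alpha_t$ enumerate all multi-indices $\alpha\in\mathbb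 N^k$ with $|\alpha|\le n$ (there are $t=\binom{n+k}{k}$ of them); the power-sum multi-symmetric polynomials are $s_j(\mathbf X)=\sum_{i=1}^n\mathbf x_i^{\alpha_j}$, $j\in[t]$. *)

theory Defs
  imports "HOL-Analysis.Analysis"
begin

definition poly_fun :: "'v set \<Rightarrow> (('v \<Rightarrow> real) \<Rightarrow> real) \<Rightarrow> bool" where
  "poly_fun V f \<longleftrightarrow> finite V \<and> (\<exists>M c. finite M \<and> (\<forall>m\<in>M. \<forall>v. v \<notin> V \<longrightarrow> m v = 0) \<and>
      (\<forall>y. f y = (\<Sum>m\<in>M. c m * (\<Prod>v\<in>V. y v ^ m v))))"

definition poly_map :: "(real^'k^'n \<Rightarrow> real^'l^'n) \<Rightarrow> bool" where
  "poly_map P \<longleftrightarrow> (\<forall>i c. poly_fun (UNIV :: ('n \<times> 'k) set)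
      (\<lambda>y. P (\<chi> i' r. y (i', r)) $ i $ c))"

definition perm_rows :: "('n \<Rightarrow> 'n) \<Rightarrow> 'a^'n \<Rightarrow> 'a^'n" where
  "perm_rows \<sigma> X = (\<chi> i. X $ (inv \<sigma> i))"

definition perm_equivariant :: "(real^'k^'n \<Rightarrow> real^'l^'n) \<Rightarrow> bool" where
  "perm_equivariant P \<longleftrightarrow>
     (\<forall>\<sigma> X. \<sigma> permutes (UNIV :: 'n set) \<longrightarrow> P (perm_rows \<sigma> X) = perm_rows \<sigma> (P X))"

definition mono_pow :: "real^'k \<Rightarrow> ('k \<Rightarrow> nat) \<Rightarrow> real" where
  "mono_pow x \<alpha> = (\<Prod>r\<in>UNIV. (x $ r) ^ \<alpha> r)"

definition multi_indices :: "nat \<Rightarrow> ('k::finite \<Rightarrow> nat) set" where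
  "multi_indices n = {\<alpha>. (\<Sum>r\<in>UNIV. \<alpha> r) \<le> n}"

definition power_sum :: "('k \<Rightarrow> nat) \<Rightarrow> real^'k^'n \<Rightarrow> real" where
  "power_sum \<alpha> X = (\<Sum>i\<in>UNIV. mono_pow (X $ i) \<alpha>)"

definition power_sum_form :: "(real^'k^'n \<Rightarrow> real^'l^'n) \<Rightarrow> bool" where
  "power_sum_form P \<longleftrightarrow> (\<exists>q :: ('k \<Rightarrow> nat) \<Rightarrow> 'l \<Rightarrow> ((('k \<Rightarrow> nat) \<Rightarrow> real) \<Rightarrow> real).
     (\<forall>\<alpha> j. poly_fun (multi_indices CARD('n)) (q \<alpha> j)) \<and>
     (\<forall>X. P X = (\<chi> i j. \<Sum>\<alpha>\<in>multi_indices CARD('n).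
                     mono_pow (X $ i) \<alpha> * q \<alpha> j (\<lambda>\<beta>. power_sum \<beta> X))))"

end

theory Submission
  imports Defs "HOL-Library.Function_Algebras"
begin

section \<open>Polynomial functions\<close>

lemma poly_funI:
  fixes m :: "'i \<Rightarrow> 'v \<Rightarrow> nat"
  assumes "finite V" "finite I" "\<And>i v. i \<in> I \<Longrightarrow> v \<notin> V \<Longrightarrow> m i v = 0"
    "\<And>y. f y = (\<Sum>i\<in>I. c i * (\<Prod>v\<in>V. y v ^ m i v))"
  shows "poly_fun V f"
proof -
  define c' where "c' \<mu> = (\<Sum>i\<in>{i\<in>I. m i = \<mu>}. c i)" for \<mu>
  have "f y = (\<Sum>\<mu>\<in>m ` I. c' \<mu> * (\<Prod>v\<in>V. y v ^ \<mu> v))" for y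
  proof -
    have "f y = (\<Sum>\<mu>\<in>m ` I. \<Sum>i\<in>{i\<in>I. m i = \<mu>}. c i * (\<Prod>v\<in>V. y v ^ m i v))"
      unfolding assms(4) using assms(2) by (rule sum.image_gen)
    also have "\<dots> = (\<Sum>\<mu>\<in>m ` I. c' \<mu> * (\<Prod>v\<in>V. y v ^ \<mu> v))"
      unfolding c'_def sum_distrib_right by (intro sum.cong refl) auto
    finally show ?thesis .
  qed
  then show ?thesis unfolding poly_fun_def using assms
    by (intro conjI exI[of _ "m ` I"] exI[of _ c']) auto
qed

lemma poly_funE:
  assumes "poly_fun V f"
  obtains M c where "finite V" "finite M" "\<And>m v. m \<in> M \<Longrightarrow> v \<notin> V \<Longrightarrow> m v = 0"
    "\<And>y. f y = (\<Sum>m\<in>M. c m * (\<Prod>v\<in>V. y v ^ m v))"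
  using assms unfolding poly_fun_def by blast

lemma poly_fun_const: "finite V \<Longrightarrow> poly_fun V (\<lambda>y. a)"
  by (rule poly_funI[where I="{()}" and m="\<lambda>_ _. 0" and c="\<lambda>_. a"]) auto

lemma poly_fun_var:
  assumes "finite V" "v0 \<in> V" shows "poly_fun V (\<lambda>y. y v0)"
proof (rule poly_funI[where I="{()}" and m="\<lambda>_ v. if v = v0 then 1 else 0" and c="\<lambda>_. 1"])
  fix y :: "'a \<Rightarrow> real"
  have "(\<Prod>v\<in>V. y v ^ (if v = v0 then 1 else 0)) = (\<Prod>v\<in>V. if v = v0 then y v0 else 1)"
    by (intro prod.cong) auto
  also have "\<dots> = y v0" using assms by (simp add: prod.delta)
  finally show "y v0 = (\<Sum>i\<in>{()}. 1 * (\<Prod>v\<in>V. y v ^ (if v = v0 then 1 else 0)))" by simp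
qed (use assms in auto)

lemma poly_fun_add:
  assumes "poly_fun V f" "poly_fun V g" shows "poly_fun V (\<lambda>y. f y + g y)"
proof -
  obtain M1 c1 where 1: "finite V" "finite M1" "\<And>m v. m \<in> M1 \<Longrightarrow> v \<notin> V \<Longrightarrow> m v = 0"
    "\<And>y. f y = (\<Sum>m\<in>M1. c1 m * (\<Prod>v\<in>V. y v ^ m v))" using assms(1) unfolding poly_fun_def by metis
  obtain M2 c2 where 2: "finite V" "finite M2" "\<And>m v. m \<in> M2 \<Longrightarrow> v \<notin> V \<Longrightarrow> m v = 0"
    "\<And>y. g y = (\<Sum>m\<in>M2. c2 m * (\<Prod>v\<in>V. y v ^ m v))" using assms(2) unfolding poly_fun_def by metis
  show ?thesis
    by (rule poly_funI[where I="M1 <+> M2" and m="case_sum id id" and c="case_sum c1 c2"])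
       (use 1 2 in \<open>auto simp: sum.Plus o_def\<close>)
qed

lemma poly_fun_mult:
  assumes "poly_fun V f" "poly_fun V g" shows "poly_fun V (\<lambda>y. f y * g y)"
proof -
  obtain M1 c1 where 1: "finite V" "finite M1" "\<And>m v. m \<in> M1 \<Longrightarrow> v \<notin> V \<Longrightarrow> m v = 0"
    "\<And>y. f y = (\<Sum>m\<in>M1. c1 m * (\<Prod>v\<in>V. y v ^ m v))" using assms(1) unfolding poly_fun_def by metis
  obtain M2 c2 where 2: "finite V" "finite M2" "\<And>m v. m \<in> M2 \<Longrightarrow> v \<notin> V \<Longrightarrow> m v = 0"
    "\<And>y. g y = (\<Sum>m\<in>M2. c2 m * (\<Prod>v\<in>V. y v ^ m v))" using assms(2) unfolding poly_fun_def by metis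
  show ?thesis
  proof (rule poly_funI[where I="M1 \<times> M2" and m="\<lambda>(a,b) v. a v + b v" and c="\<lambda>(a,b). c1 a * c2 b"])
    fix y :: "'a \<Rightarrow> real"
    have "f y * g y = (\<Sum>a\<in>M1. \<Sum>b\<in>M2. (c1 a * (\<Prod>v\<in>V. y v ^ a v)) * (c2 b * (\<Prod>v\<in>V. y v ^ b v)))"
      unfolding 1(4) 2(4) by (rule sum_product)
    also have "\<dots> = (\<Sum>(a,b)\<in>M1 \<times> M2. c1 a * c2 b * (\<Prod>v\<in>V. y v ^ (a v + b v)))"
      unfolding sum.cartesian_product
      by (intro sum.cong refl) (auto simp: power_add prod.distrib)
    finally show "f y * g y = (\<Sum>i\<in>M1 \<times> M2. (case i of (a, b) \<Rightarrow> c1 a * c2 b) *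
        (\<Prod>v\<in>V. y v ^ (case i of (a, b) \<Rightarrow> \<lambda>v. a v + b v) v))"
      by (simp add: case_prod_beta)
  qed (use 1 2 in auto)
qed

lemma poly_fun_sum:
  assumes "finite S" "finite V" "\<And>s. s \<in> S \<Longrightarrow> poly_fun V (f s)"
  shows "poly_fun V (\<lambda>y. \<Sum>s\<in>S. f s y)"
  using assms by (induction S rule: finite_induct) (auto intro!: poly_fun_const poly_fun_add)

lemma poly_fun_prod:
  assumes "finite S" "finite V" "\<And>s. s \<in> S \<Longrightarrow> poly_fun V (f s)"
  shows "poly_fun V (\<lambda>y. \<Prod>s\<in>S. f s y)"
  using assms by (induction S rule: finite_induct) (auto intro!: poly_fun_const poly_fun_mult)

section \<open>Degrees, monomials, power sums\<close>

definition deg :: "('k::finite \<Rightarrow> nat) \<Rightarrow> nat" where "deg \<alpha> = (\<Sum>r\<in>UNIV. \<alpha> r)"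

lemma deg_add: "deg (\<alpha> + \<beta>) = deg \<alpha> + deg \<beta>"
  by (simp add: deg_def sum.distrib)

lemma deg_0: "deg 0 = 0" by (simp add: deg_def)

lemma deg_sum: "deg (sum a J) = (\<Sum>j\<in>J. deg (a j))"
proof (cases "finite J")
  case True then show ?thesis
  proof (induction J rule: finite_induct)
    case (insert x F) then show ?case by (simp only: sum.insert[OF insert(1,2)] deg_add)
  qed (simp add: deg_def)
qed (simp add: deg_0)

lemma mono_pow_add: "mono_pow x (\<alpha> + \<beta>) = mono_pow x \<alpha> * mono_pow x \<beta>"
  by (simp add: mono_pow_def power_add prod.distrib)

lemma mono_pow_0: "mono_pow x 0 = 1" by (simp add: mono_pow_def)

lemma mono_pow_sum: "mono_pow x (sum a J) = (\<Prod>j\<in>J. mono_pow x (a j))"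
proof (cases "finite J")
  case True then show ?thesis
  proof (induction J rule: finite_induct)
    case (insert x F) then show ?case
      by (simp only: sum.insert[OF insert(1,2)] prod.insert[OF insert(1,2)] mono_pow_add)
  qed (simp add: mono_pow_def)
qed (simp add: mono_pow_0)

definition LTs :: "nat \<Rightarrow> ('k::finite \<Rightarrow> nat) set" where "LTs d = {\<alpha>. deg \<alpha> < d}"

lemma finite_LTs: "finite (LTs d :: ('k::finite \<Rightarrow> nat) set)"
proof (rule finite_subset[of _ "PiE UNIV (\<lambda>_::'k. {..<d})"])
  show "(LTs d :: ('k \<Rightarrow> nat) set) \<subseteq> PiE UNIV (\<lambda>_. {..<d})"
  proof
    fix \<alpha> :: "'k \<Rightarrow> nat" assume "\<alpha> \<in> LTs d"
    then have "\<alpha> r < d" for r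
      using member_le_sum[of r UNIV \<alpha>] by (auto simp: LTs_def deg_def)
    then show "\<alpha> \<in> PiE UNIV (\<lambda>_. {..<d})" by (auto simp: PiE_UNIV_domain)
  qed
qed (auto intro: finite_PiE)

lemma multi_indices_LTs: "multi_indices n = LTs (Suc n)"
  by (auto simp: multi_indices_def LTs_def deg_def)

lemma finite_multi_indices: "finite (multi_indices n)"
  by (simp add: multi_indices_LTs finite_LTs)

lemma perm_rows_nth: "perm_rows \<sigma> X $ i = X $ inv \<sigma> i"
  by (simp add: perm_rows_def)

lemma power_sum_perm:
  assumes "\<sigma> permutes UNIV" shows "power_sum \<beta> (perm_rows \<sigma> X) = power_sum \<beta> X"
proof -
  have "power_sum \<beta> X = (\<Sum>i\<in>UNIV. mono_pow (X $ i) \<beta>)" by (simp add: power_sum_def)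
  also have "\<dots> = (\<Sum>i\<in>UNIV. mono_pow (X $ inv \<sigma> i) \<beta>)"
    using sum.permute[OF permutes_inv[OF assms], of "\<lambda>i. mono_pow (X $ i) \<beta>"] by (simp add: o_def)
  finally show ?thesis by (simp add: power_sum_def perm_rows_nth)
qed

definition PS :: "(real^'k^'n \<Rightarrow> real) set" where
  "PS = {h. \<exists>Q. poly_fun (multi_indices CARD('n)) Q \<and> (\<forall>X. h X = Q (\<lambda>\<beta>. power_sum \<beta> X))}"

lemma PS_const: "(\<lambda>X. a) \<in> PS"
  unfolding PS_def by (auto intro!: exI[of _ "\<lambda>_. a"] poly_fun_const finite_multi_indices)

lemma PS_ps: "deg \<beta> \<le> CARD('n) \<Longrightarrow> (power_sum \<beta> :: real^'k^'n \<Rightarrow> real) \<in> PS"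
proof -
  assume "deg \<beta> \<le> CARD('n)"
  then have "\<beta> \<in> multi_indices CARD('n)" by (simp add: multi_indices_def deg_def)
  then show ?thesis unfolding PS_def
    by (auto intro!: exI[of _ "\<lambda>y. y \<beta>"] poly_fun_var finite_multi_indices)
qed

lemma PS_add: "f \<in> PS \<Longrightarrow> g \<in> PS \<Longrightarrow> (\<lambda>X. f X + g X) \<in> PS"
  unfolding PS_def by (auto intro!: poly_fun_add)

lemma PS_mult: "f \<in> PS \<Longrightarrow> g \<in> PS \<Longrightarrow> (\<lambda>X. f X * g X) \<in> PS"
  unfolding PS_def by (auto intro!: poly_fun_mult)

lemma PS_sum: "finite S \<Longrightarrow> (\<And>s. s \<in> S \<Longrightarrow> f s \<in> PS) \<Longrightarrow> (\<lambda>X. \<Sum>s\<in>S. f s X) \<in> PS"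
  by (induction S rule: finite_induct) (auto intro!: PS_const PS_add)

lemma PS_cong: "f \<in> PS \<Longrightarrow> (\<And>X. f X = g X) \<Longrightarrow> g \<in> PS"
proof -
  assume "f \<in> PS" "\<And>X. f X = g X"
  then have "f = g" by auto
  then show ?thesis using \<open>f \<in> PS\<close> by simp
qed

lemma PS_perm:
  assumes "h \<in> PS" "\<sigma> permutes UNIV" shows "h (perm_rows \<sigma> X) = h X"
proof -
  obtain Q where "\<forall>X. h X = Q (\<lambda>\<beta>. power_sum \<beta> X)" using assms(1) unfolding PS_def by auto
  then show ?thesis by (simp add: power_sum_perm[OF assms(2)])
qed


section \<open>Representable functions\<close>

definition Rep :: "'n::finite \<Rightarrow> nat \<Rightarrow> (real^'k^'n \<Rightarrow> real) set" where
  "Rep i d = {h. \<exists>q. (\<forall>\<alpha>. q \<alpha> \<in> PS) \<and> (\<forall>X. h X = (\<Sum>\<alpha>\<in>LTs d. mono_pow (X $ i) \<alpha> * q \<alpha> X))}"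

lemma RepI: "(\<And>\<alpha>. q \<alpha> \<in> PS) \<Longrightarrow> (\<And>X. h X = (\<Sum>\<alpha>\<in>LTs d. mono_pow (X $ i) \<alpha> * q \<alpha> X)) \<Longrightarrow> h \<in> Rep i d"
  unfolding Rep_def by blast

lemma RepE:
  assumes "h \<in> Rep i d"
  obtains q where "\<And>\<alpha>. q \<alpha> \<in> PS" "\<And>X. h X = (\<Sum>\<alpha>\<in>LTs d. mono_pow (X $ i) \<alpha> * q \<alpha> X)"
  using assms unfolding Rep_def by blast

lemma Rep_cong: "h \<in> Rep i d \<Longrightarrow> (\<And>X. h X = g X) \<Longrightarrow> g \<in> Rep i d"
proof -
  assume "h \<in> Rep i d" "\<And>X. h X = g X"
  then have "h = g" by auto
  then show ?thesis using \<open>h \<in> Rep i d\<close> by simp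
qed

lemma Rep_0: "(\<lambda>X. 0) \<in> Rep i d"
  by (rule RepI[where q="\<lambda>_ _. 0"]) (auto intro: PS_const)

lemma Rep_add:
  assumes "f \<in> Rep i d" "g \<in> Rep i d" shows "(\<lambda>X. f X + g X) \<in> Rep i d"
proof -
  obtain q1 where q1: "\<And>\<alpha>. q1 \<alpha> \<in> PS" "\<And>X. f X = (\<Sum>\<alpha>\<in>LTs d. mono_pow (X $ i) \<alpha> * q1 \<alpha> X)"
    by (rule RepE[OF assms(1)], rule that, assumption+)
  obtain q2 where q2: "\<And>\<alpha>. q2 \<alpha> \<in> PS" "\<And>X. g X = (\<Sum>\<alpha>\<in>LTs d. mono_pow (X $ i) \<alpha> * q2 \<alpha> X)"
    by (rule RepE[OF assms(2)], rule that, assumption+)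
  show ?thesis
    by (rule RepI[where q="\<lambda>\<alpha> X. q1 \<alpha> X + q2 \<alpha> X"])
       (auto intro: PS_add q1(1) q2(1) simp: q1(2) q2(2) sum.distrib distrib_left)
qed

lemma Rep_scale:
  assumes "p \<in> PS" "h \<in> Rep i d" shows "(\<lambda>X. p X * h X) \<in> Rep i d"
proof -
  obtain q where q: "\<And>\<alpha>. q \<alpha> \<in> PS" "\<And>X. h X = (\<Sum>\<alpha>\<in>LTs d. mono_pow (X $ i) \<alpha> * q \<alpha> X)"
    by (rule RepE[OF assms(2)], rule that, assumption+)
  show ?thesis
    by (rule RepI[where q="\<lambda>\<alpha> X. p X * q \<alpha> X"])
       (auto intro: PS_mult q(1) assms(1) simp: q(2) sum_distrib_left mult_ac)
qed

lemma Rep_cmult: "h \<in> Rep i d \<Longrightarrow> (\<lambda>X. c * h X) \<in> Rep i d"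
  using Rep_scale[OF PS_const] .

lemma Rep_diff:
  assumes "f \<in> Rep i d" "g \<in> Rep i d" shows "(\<lambda>X. f X - g X) \<in> Rep i d"
proof -
  have "(\<lambda>X. f X + (-1) * g X) \<in> Rep i d" by (intro Rep_add Rep_cmult assms)
  then show ?thesis by (rule Rep_cong) simp
qed

lemma Rep_sum:
  assumes "finite S" "\<And>s. s \<in> S \<Longrightarrow> f s \<in> Rep i d" shows "(\<lambda>X. \<Sum>s\<in>S. f s X) \<in> Rep i d"
  using assms by (induction S rule: finite_induct) (auto intro!: Rep_0 Rep_add)

lemma Rep_mono:
  assumes "h \<in> Rep i d" "d \<le> d'" shows "h \<in> Rep i d'"
proof -
  obtain q where q: "\<And>\<alpha>. q \<alpha> \<in> PS" "\<And>X. h X = (\<Sum>\<alpha>\<in>LTs d. mono_pow (X $ i) \<alpha> * q \<alpha> X)"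
    by (rule RepE[OF assms(1)], rule that, assumption+)
  have sub: "LTs d \<subseteq> LTs d'" using assms(2) by (auto simp: LTs_def)
  show ?thesis
  proof (rule RepI[where q="\<lambda>\<alpha>. if \<alpha> \<in> LTs d then q \<alpha> else (\<lambda>_. 0)"])
    show "(if \<alpha> \<in> LTs d then q \<alpha> else (\<lambda>_. 0)) \<in> PS" for \<alpha> by (auto intro: q(1) PS_const)
    fix X
    show "h X = (\<Sum>\<alpha>\<in>LTs d'. mono_pow (X $ i) \<alpha> * (if \<alpha> \<in> LTs d then q \<alpha> else (\<lambda>_. 0)) X)"
      unfolding q(2) by (rule sum.mono_neutral_cong_left) (auto simp: finite_LTs sub)
  qed
qed

lemma Rep_mon:
  assumes "deg \<alpha> < d" shows "(\<lambda>X. mono_pow (X $ i) \<alpha>) \<in> Rep i d"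
proof (rule RepI[where q="\<lambda>\<beta> X. if \<beta> = \<alpha> then 1 else 0"])
  show "(\<lambda>X. if \<beta> = \<alpha> then 1 else 0) \<in> PS" for \<beta> by (auto intro: PS_const)
  fix X
  have "(\<Sum>\<beta>\<in>LTs d. mono_pow (X $ i) \<beta> * (if \<beta> = \<alpha> then 1 else 0))
      = (\<Sum>\<beta>\<in>LTs d. if \<beta> = \<alpha> then mono_pow (X $ i) \<beta> else 0)"
    by (rule sum.cong) auto
  also have "\<dots> = mono_pow (X $ i) \<alpha>" by (subst sum.delta[OF finite_LTs]) (simp add: assms LTs_def)
  finally show "mono_pow (X $ i) \<alpha> = (\<Sum>\<beta>\<in>LTs d. mono_pow (X $ i) \<beta> * (if \<beta> = \<alpha> then 1 else 0))"
    by simp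
qed

lemma Rep_PS:
  assumes "p \<in> PS" "0 < d" shows "p \<in> Rep i d"
proof -
  have "(\<lambda>X. p X * mono_pow (X $ i) 0) \<in> Rep i d"
    by (rule Rep_scale[OF assms(1) Rep_mon]) (simp add: deg_def assms(2))
  then show ?thesis by (rule Rep_cong) (simp add: mono_pow_def)
qed

lemma Rep_shift:
  assumes "h \<in> Rep i d" shows "(\<lambda>X. mono_pow (X $ i) e * h X) \<in> Rep i (d + deg e)"
proof -
  obtain q where q: "\<And>\<alpha>. q \<alpha> \<in> PS" "\<And>X. h X = (\<Sum>\<alpha>\<in>LTs d. mono_pow (X $ i) \<alpha> * q \<alpha> X)"
    by (rule RepE[OF assms], rule that, assumption+)
  define S where "S = (\<lambda>\<alpha>. \<alpha> + e) ` LTs d"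
  define q' where "q' \<beta> = (if \<beta> \<in> S then q (\<beta> - e) else (\<lambda>_. 0))" for \<beta>
  have inj: "inj_on (\<lambda>\<alpha>. \<alpha> + e) (LTs d)" by (auto simp: inj_on_def)
  have sub: "S \<subseteq> LTs (d + deg e)" by (auto simp: S_def LTs_def deg_add)
  show ?thesis
  proof (rule RepI[where q=q'])
    show "q' \<alpha> \<in> PS" for \<alpha> by (auto simp: q'_def q PS_const)
    fix X
    have "mono_pow (X $ i) e * h X = (\<Sum>\<alpha>\<in>LTs d. mono_pow (X $ i) (\<alpha> + e) * q \<alpha> X)"
      by (simp add: q(2) sum_distrib_left mono_pow_add mult_ac)
    also have "\<dots> = (\<Sum>\<beta>\<in>S. mono_pow (X $ i) \<beta> * q' \<beta> X)"
      unfolding S_def by (subst sum.reindex[OF inj]) (auto simp: q'_def S_def intro!: sum.cong)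
    also have "\<dots> = (\<Sum>\<beta>\<in>LTs (d + deg e). mono_pow (X $ i) \<beta> * q' \<beta> X)"
      by (rule sum.mono_neutral_left) (auto simp: finite_LTs sub q'_def)
    finally show "mono_pow (X $ i) e * h X = \<dots>" .
  qed
qed


section \<open>Sums over injections\<close>

definition Inj :: "'j set \<Rightarrow> 'b set \<Rightarrow> ('j \<Rightarrow> 'b) set" where
  "Inj J B = {\<phi> \<in> J \<rightarrow>\<^sub>E B. inj_on \<phi> J}"

definition Tsum :: "('b \<Rightarrow> 'e \<Rightarrow> real) \<Rightarrow> 'b set \<Rightarrow> 'j set \<Rightarrow> ('j \<Rightarrow> 'e) \<Rightarrow> real" where
  "Tsum g B J a = (\<Sum>\<phi>\<in>Inj J B. \<Prod>j\<in>J. g (\<phi> j) (a j))"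

lemma finite_Inj: "finite J \<Longrightarrow> finite B \<Longrightarrow> finite (Inj J B)"
  unfolding Inj_def by (rule finite_subset[OF _ finite_PiE]) auto

lemma Tsum_empty: "Tsum g B {} a = 1"
  by (simp add: Tsum_def Inj_def)

lemma Tsum_zero:
  assumes "finite B" "card B < card J" shows "Tsum g B J a = 0"
proof -
  have "Inj J B = {}"
  proof (rule ccontr)
    assume "Inj J B \<noteq> {}"
    then obtain \<phi> where "\<phi> \<in> Inj J B" by blast
    then have "inj_on \<phi> J" "\<phi> ` J \<subseteq> B" by (auto simp: Inj_def)
    then have "card J \<le> card B" using card_inj_on_le assms(1) by blast
    then show False using assms(2) by simp
  qed
  then show ?thesis by (simp add: Tsum_def)
qed

lemma Tsum_insert:
  fixes g :: "'b \<Rightarrow> 'e::comm_monoid_add \<Rightarrow> real" and a :: "'j \<Rightarrow> 'e"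
  assumes J: "finite J" and B: "finite B" and z: "z \<notin> J"
    and g: "\<And>l e1 e2. g l (e1 + e2) = g l e1 * g l e2"
  shows "Tsum g B (insert z J) a = Tsum g B J a * (\<Sum>l\<in>B. g l (a z))
           - (\<Sum>j\<in>J. Tsum g B J (a(j := a j + a z)))"
proof -
  define pr where "pr \<phi> = (\<Prod>j\<in>J. g (\<phi> j) (a j))" for \<phi>
  have fin: "finite (Inj J B)" using J B by (rule finite_Inj)
  have split: "Tsum g B J a * (\<Sum>l\<in>B. g l (a z)) =
     (\<Sum>\<phi>\<in>Inj J B. \<Sum>l\<in>B - \<phi> ` J. pr \<phi> * g l (a z)) + (\<Sum>\<phi>\<in>Inj J B. \<Sum>l\<in>\<phi> ` J. pr \<phi> * g l (a z))"
  proof -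
    have "Tsum g B J a * (\<Sum>l\<in>B. g l (a z)) = (\<Sum>\<phi>\<in>Inj J B. \<Sum>l\<in>B. pr \<phi> * g l (a z))"
      unfolding Tsum_def pr_def by (rule sum_product)
    also have "\<dots> = (\<Sum>\<phi>\<in>Inj J B. (\<Sum>l\<in>B - \<phi> ` J. pr \<phi> * g l (a z)) + (\<Sum>l\<in>\<phi> ` J. pr \<phi> * g l (a z)))"
    proof (rule sum.cong[OF refl])
      fix \<phi> assume "\<phi> \<in> Inj J B"
      then have "\<phi> ` J \<subseteq> B" by (auto simp: Inj_def)
      then show "(\<Sum>l\<in>B. pr \<phi> * g l (a z)) = (\<Sum>l\<in>B - \<phi> ` J. pr \<phi> * g l (a z)) + (\<Sum>l\<in>\<phi> ` J. pr \<phi> * g l (a z))"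
        using B by (rule sum.subset_diff)
    qed
    also have "\<dots> = (\<Sum>\<phi>\<in>Inj J B. \<Sum>l\<in>B - \<phi> ` J. pr \<phi> * g l (a z)) + (\<Sum>\<phi>\<in>Inj J B. \<Sum>l\<in>\<phi> ` J. pr \<phi> * g l (a z))"
      by (rule sum.distrib)
    finally show ?thesis .
  qed
  have A1: "(\<Sum>\<phi>\<in>Inj J B. \<Sum>l\<in>B - \<phi> ` J. pr \<phi> * g l (a z)) = Tsum g B (insert z J) a"
  proof -
    have "(\<Sum>\<phi>\<in>Inj J B. \<Sum>l\<in>B - \<phi> ` J. pr \<phi> * g l (a z))
        = (\<Sum>p\<in>Sigma (Inj J B) (\<lambda>\<phi>. B - \<phi> ` J). pr (fst p) * g (snd p) (a z))"
      using fin B by (subst sum.Sigma) (auto simp: case_prod_beta)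
    also have "\<dots> = Tsum g B (insert z J) a"
      unfolding Tsum_def
    proof (rule sum.reindex_bij_witness[where j="\<lambda>p. (fst p)(z := snd p)" and i="\<lambda>\<psi>. (\<psi>(z := undefined), \<psi> z)"])
      fix p assume p: "p \<in> Sigma (Inj J B) (\<lambda>\<phi>. B - \<phi> ` J)"
      obtain \<phi> l where pl: "p = (\<phi>, l)" by fastforce
      have \<phi>: "\<phi> \<in> J \<rightarrow>\<^sub>E B" "inj_on \<phi> J" and l: "l \<in> B" "l \<notin> \<phi> ` J"
        using p by (auto simp: pl Inj_def)
      have "\<phi> z = undefined" using \<phi>(1) z by (auto simp: PiE_def extensional_def)
      then show "((fst p)(z := snd p, z := undefined), ((fst p)(z := snd p)) z) = p"
        by (auto simp: pl fun_eq_iff)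
      show "(fst p)(z := snd p) \<in> Inj (insert z J) B"
        using \<phi> l z unfolding Inj_def by (auto simp: pl PiE_iff extensional_def inj_on_def)
      have "(\<Prod>j\<in>insert z J. g (((fst p)(z := snd p)) j) (a j)) = g l (a z) * (\<Prod>j\<in>J. g (\<phi> j) (a j))"
      proof -
        have "(\<Prod>j\<in>J. g (if j = z then l else \<phi> j) (a j)) = (\<Prod>j\<in>J. g (\<phi> j) (a j))"
          using z by (intro prod.cong refl) auto
        then show ?thesis using J z by (simp add: pl)
      qed
      then show "(\<Prod>j\<in>insert z J. g (((fst p)(z := snd p)) j) (a j)) = pr (fst p) * g (snd p) (a z)"
        by (simp add: pl pr_def)
    next
      fix \<psi> assume \<psi>: "\<psi> \<in> Inj (insert z J) B"
      then have \<psi>1: "\<psi> \<in> insert z J \<rightarrow>\<^sub>E B" "inj_on \<psi> (insert z J)" by (auto simp: Inj_def)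
      show "(fst (\<psi>(z := undefined), \<psi> z))(z := snd (\<psi>(z := undefined), \<psi> z)) = \<psi>" by simp
      have "\<psi> z \<notin> \<psi> ` J" using \<psi>1(2) z by (auto simp: inj_on_def)
      then show "(\<psi>(z := undefined), \<psi> z) \<in> Sigma (Inj J B) (\<lambda>\<phi>. B - \<phi> ` J)"
        using \<psi>1 z unfolding Inj_def
        by (auto simp: PiE_iff extensional_def inj_on_def image_iff split: if_splits)
    qed
    finally show ?thesis .
  qed
  have A2: "(\<Sum>\<phi>\<in>Inj J B. \<Sum>l\<in>\<phi> ` J. pr \<phi> * g l (a z)) = (\<Sum>j\<in>J. Tsum g B J (a(j := a j + a z)))"
  proof -
    have "(\<Sum>\<phi>\<in>Inj J B. \<Sum>l\<in>\<phi> ` J. pr \<phi> * g l (a z)) = (\<Sum>\<phi>\<in>Inj J B. \<Sum>j\<in>J. pr \<phi> * g (\<phi> j) (a z))"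
      by (rule sum.cong[OF refl], subst sum.reindex) (auto simp: Inj_def)
    also have "\<dots> = (\<Sum>j\<in>J. \<Sum>\<phi>\<in>Inj J B. pr \<phi> * g (\<phi> j) (a z))" by (rule sum.swap)
    also have "\<dots> = (\<Sum>j\<in>J. Tsum g B J (a(j := a j + a z)))"
      unfolding Tsum_def
    proof (rule sum.cong[OF refl], rule sum.cong[OF refl])
      fix j \<phi> assume j: "j \<in> J" and "\<phi> \<in> Inj J B"
      have "(\<Prod>j'\<in>J. g (\<phi> j') ((a(j := a j + a z)) j')) = g (\<phi> j) (a j + a z) * (\<Prod>j'\<in>J - {j}. g (\<phi> j') ((a(j := a j + a z)) j'))"
        using J j by (simp add: prod.remove)
      also have "\<dots> = g (\<phi> j) (a j + a z) * (\<Prod>j'\<in>J - {j}. g (\<phi> j') (a j'))"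
        by (intro arg_cong2[where f="(*)"] refl prod.cong) auto
      also have "\<dots> = (g (\<phi> j) (a j) * (\<Prod>j'\<in>J - {j}. g (\<phi> j') (a j'))) * g (\<phi> j) (a z)"
        by (simp add: g mult_ac)
      also have "\<dots> = pr \<phi> * g (\<phi> j) (a z)"
        using J j by (simp add: pr_def prod.remove)
      finally show "pr \<phi> * g (\<phi> j) (a z) = (\<Prod>j'\<in>J. g (\<phi> j') ((a(j := a j + a z)) j'))" by simp
    qed
    finally show ?thesis .
  qed
  show ?thesis using split A1 A2 by simp
qed


section \<open>Reduction of high degree monomials\<close>

definition TT :: "'n::finite \<Rightarrow> real^'k^'n \<Rightarrow> 'j set \<Rightarrow> ('j \<Rightarrow> ('k::finite \<Rightarrow> nat)) \<Rightarrow> real" where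
  "TT i X J a = Tsum (\<lambda>l e. mono_pow (X $ l) e) (UNIV - {i}) J a"

lemma sum_remove_row: "(\<Sum>l\<in>UNIV - {i}. mono_pow (X $ l) e) = power_sum e X - mono_pow (X $ i) e"
  by (simp add: power_sum_def sum_diff1)

lemma TT_insert:
  assumes "finite J" "z \<notin> J"
  shows "TT i X (insert z J) a = TT i X J a * (power_sum (a z) X - mono_pow (X $ i) (a z))
           - (\<Sum>j\<in>J. TT i X J (a(j := a j + a z)))"
  unfolding TT_def sum_remove_row[symmetric]
  by (rule Tsum_insert[OF assms(1) _ assms(2)]) (auto simp: mono_pow_add)

lemma sum_upd_add:
  fixes a :: "'j \<Rightarrow> 'e::comm_monoid_add"
  assumes "finite J" "j \<in> J" shows "sum (a(j := a j + e)) J = sum a J + e"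
proof -
  have "sum (a(j := a j + e)) J = (a j + e) + sum (a(j := a j + e)) (J - {j})"
    using assms by (simp add: sum.remove)
  also have "sum (a(j := a j + e)) (J - {j}) = sum a (J - {j})" by (rule sum.cong) auto
  also have "a j + e + sum a (J - {j}) = sum a J + e"
    using assms by (simp add: sum.remove add_ac)
  finally show ?thesis .
qed

lemma deg_pos: "(e::'k::finite \<Rightarrow> nat) \<noteq> 0 \<Longrightarrow> 0 < deg e"
proof (rule ccontr)
  assume "e \<noteq> 0" "\<not> 0 < deg e"
  then have "\<forall>r. e r = 0" by (simp add: deg_def)
  then have "e = 0" by (simp add: fun_eq_iff)
  then show False using \<open>e \<noteq> 0\<close> by simp
qed

lemma lead:
  fixes i :: "'n::finite" and J :: "'j set" and a :: "'j \<Rightarrow> ('k::finite \<Rightarrow> nat)"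
  assumes "finite J"
  shows "(\<forall>j\<in>J. a j \<noteq> 0) \<Longrightarrow> deg (sum a J) \<le> CARD('n) \<Longrightarrow>
    (\<lambda>X::real^'k^'n. TT i X J a - (-1)^card J * fact (card J) * mono_pow (X $ i) (sum a J))
      \<in> Rep i (deg (sum a J))"
  using assms
proof (induction J arbitrary: a rule: finite_induct)
  case empty
  show ?case
    by (rule Rep_cong[OF Rep_0]) (simp add: TT_def Tsum_empty mono_pow_def)
next
  case (insert z J)
  define e where "e = a z"
  define A where "A = sum a J"
  define m where "m = card J"
  define c :: real where "c = (-1)^m * fact m"
  have sumins: "sum a (insert z J) = e + A" using insert(1,2) by (simp add: e_def A_def)
  have cardins: "card (insert z J) = Suc m" using insert(1,2) by (simp add: m_def)
  have degins: "deg (sum a (insert z J)) = deg e + deg A" by (simp add: sumins deg_add)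
  have e0: "e \<noteq> 0" using insert(4) unfolding e_def by blast
  have dege: "0 < deg e" using e0 by (rule deg_pos)
  have degen: "deg e \<le> CARD('n)" and degAn: "deg A \<le> CARD('n)" using insert(5) degins by auto
  define R where "R X = TT i X J a - c * mono_pow (X $ i) A" for X :: "real^'k^'n"
  have R: "R \<in> Rep i (deg A)"
    using insert(3)[of a] insert(4) degAn unfolding R_def c_def m_def A_def by auto
  define a' where "a' j = a(j := a j + e)" for j
  define Rj where "Rj j X = TT i X J (a' j) - c * mono_pow (X $ i) (A + e)" for j and X :: "real^'k^'n"
  have Rj: "Rj j \<in> Rep i (deg A + deg e)" if j: "j \<in> J" for j
  proof -
    have suma': "sum (a' j) J = A + e" unfolding a'_def A_def using insert(1) j by (rule sum_upd_add)
    have nz: "\<forall>j'\<in>J. a' j j' \<noteq> 0"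
    proof
      fix j' assume "j' \<in> J"
      show "a' j j' \<noteq> 0"
      proof (cases "j' = j")
        case True
        show ?thesis
        proof
          assume "a' j j' = 0"
          then have "a j + e = 0" using True by (simp add: a'_def)
          then have "e = 0" by (auto simp: fun_eq_iff)
          then show False using e0 by simp
        qed
      qed (use \<open>j' \<in> J\<close> insert(4) in \<open>auto simp: a'_def zero_fun_def\<close>)
    qed
    have "deg (sum (a' j) J) \<le> CARD('n)" using insert(5) degins by (simp add: suma' deg_add)
    then have "(\<lambda>X::real^'k^'n. TT i X J (a' j) - (-1)^card J * fact (card J) * mono_pow (X $ i) (sum (a' j) J))
      \<in> Rep i (deg (sum (a' j) J))" using insert(3)[of "a' j"] nz by blast
    then show ?thesis unfolding Rj_def suma' c_def m_def by (simp add: deg_add)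
  qed
  have eq: "TT i X (insert z J) a - (-1)^card (insert z J) * fact (card (insert z J)) * mono_pow (X $ i) (sum a (insert z J))
      = (c * power_sum e X) * mono_pow (X $ i) A + power_sum e X * R X - mono_pow (X $ i) e * R X
        - (\<Sum>j\<in>J. Rj j X)" for X
  proof -
    have T: "TT i X (insert z J) a = TT i X J a * (power_sum e X - mono_pow (X $ i) e)
           - (\<Sum>j\<in>J. TT i X J (a' j))"
      unfolding e_def a'_def by (rule TT_insert[OF insert(1,2)])
    have S: "(\<Sum>j\<in>J. TT i X J (a' j)) = (\<Sum>j\<in>J. Rj j X) + real m * (c * mono_pow (X $ i) A * mono_pow (X $ i) e)"
      by (simp add: Rj_def sum_subtractf m_def mono_pow_add mult_ac)
    have TJ: "TT i X J a = R X + c * mono_pow (X $ i) A" by (simp add: R_def)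
    have C: "(-1::real)^card (insert z J) * fact (card (insert z J)) = - (real m + 1) * c"
      by (simp add: cardins c_def algebra_simps)
    show ?thesis unfolding T S TJ C sumins mono_pow_add by (simp add: algebra_simps)
  qed
  show ?case
  proof (rule Rep_cong[OF _ eq[symmetric]], unfold degins)
    have P1: "(\<lambda>X. (c * power_sum e X) * mono_pow (X $ i) A) \<in> Rep i (deg e + deg A)"
      by (rule Rep_scale[OF PS_mult[OF PS_const PS_ps[OF degen]] Rep_mon]) (use dege in simp)
    have P2: "(\<lambda>X. power_sum e X * R X) \<in> Rep i (deg e + deg A)"
      by (rule Rep_mono[OF Rep_scale[OF PS_ps[OF degen] R]]) simp
    have P3: "(\<lambda>X. mono_pow (X $ i) e * R X) \<in> Rep i (deg e + deg A)"
      by (rule Rep_mono[OF Rep_shift[OF R]]) simp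
    have P4: "(\<lambda>X. \<Sum>j\<in>J. Rj j X) \<in> Rep i (deg e + deg A)"
      by (rule Rep_sum[OF insert(1)], rule Rep_mono[OF Rj]) auto
    show "(\<lambda>X. c * power_sum e X * mono_pow (X $ i) A + power_sum e X * R X - mono_pow (X $ i) e * R X
        - (\<Sum>j\<in>J. Rj j X)) \<in> Rep i (deg e + deg A)"
      by (intro Rep_diff Rep_add P1 P2 P3 P4)
  qed
qed


definition unitv :: "'k \<Rightarrow> ('k \<Rightarrow> nat)" where "unitv c = (\<lambda>r. if r = c then 1 else 0)"

lemma deg_unitv: "deg (unitv (c::'k::finite)) = 1" by (simp add: deg_def unitv_def)

lemma split_unit:
  assumes "0 < deg (\<delta>::'k::finite \<Rightarrow> nat)"
  obtains c \<delta>' where "\<delta> = \<delta>' + unitv c" "deg \<delta>' = deg \<delta> - 1"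
proof -
  obtain c where c: "0 < \<delta> c"
  proof (rule ccontr)
    assume "\<not> thesis"
    then have "\<forall>c. \<delta> c = 0" using that by auto
    then show False using assms by (simp add: deg_def)
  qed
  define \<delta>' where "\<delta>' = (\<lambda>r. if r = c then \<delta> r - 1 else \<delta> r)"
  have e: "\<delta> = \<delta>' + unitv c" using c by (auto simp: fun_eq_iff \<delta>'_def unitv_def)
  then have "deg \<delta> = deg \<delta>' + 1" by (simp add: deg_add deg_unitv)
  then show ?thesis using that e by simp
qed

lemma exist_units:
  assumes "finite J"
  shows "deg (\<delta>::'k::finite\<Rightarrow>nat) = card J \<Longrightarrow> \<exists>a. (\<forall>j\<in>J. deg (a j) = 1) \<and> sum a J = \<delta>"
  using assms
proof (induction J arbitrary: \<delta> rule: finite_induct)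
  case empty
  then have "\<delta> = 0" using deg_pos by fastforce
  then show ?case by simp
next
  case (insert z J)
  have dd: "deg \<delta> = Suc (card J)" using insert(1,2,4) by simp
  then have "0 < deg \<delta>" by simp
  then obtain c \<delta>' where d: "\<delta> = \<delta>' + unitv c" "deg \<delta>' = deg \<delta> - 1" by (rule split_unit)
  have "deg \<delta>' = card J" using d(2) dd by linarith
  then obtain a' where a': "\<forall>j\<in>J. deg (a' j) = 1" "sum a' J = \<delta>'" using insert(3) by blast
  define a where "a = a'(z := unitv c)"
  have "sum a (insert z J) = unitv c + sum a J" using insert(1,2) by (simp add: a_def)
  also have "sum a J = sum a' J" using insert(2) by (intro sum.cong) (auto simp: a_def)
  finally have "sum a (insert z J) = unitv c + sum a' J" .
  then have "sum a (insert z J) = \<delta>" unfolding a'(2) d(1) by (simp only: add.commute)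
  moreover have "\<forall>j\<in>insert z J. deg (a j) = 1" using a' insert(2) by (auto simp: a_def deg_unitv)
  ultimately show ?case by blast
qed

lemma base:
  fixes i :: "'n::finite" and \<delta> :: "'k::finite \<Rightarrow> nat"
  assumes "deg \<delta> = CARD('n)"
  shows "(\<lambda>X::real^'k^'n. mono_pow (X $ i) \<delta>) \<in> Rep i CARD('n)"
proof -
  obtain a :: "'n \<Rightarrow> ('k \<Rightarrow> nat)" where a: "\<forall>j\<in>UNIV. deg (a j) = 1" "sum a UNIV = \<delta>"
    using exist_units[of "UNIV::'n set" \<delta>] assms by auto
  have nz: "\<forall>j\<in>UNIV. a j \<noteq> 0" using a(1) by (metis deg_0 zero_neq_one)
  have L: "(\<lambda>X::real^'k^'n. TT i X UNIV a - (-1)^card (UNIV::'n set) * fact (card (UNIV::'n set))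
      * mono_pow (X $ i) (sum a UNIV)) \<in> Rep i (deg (sum a UNIV))"
    by (rule lead) (use nz a assms in auto)
  have T0: "TT i X UNIV a = 0" for X :: "real^'k^'n"
    unfolding TT_def by (rule Tsum_zero) (auto simp: card_Diff_singleton)
  define c :: real where "c = (-1)^CARD('n) * fact CARD('n)"
  have c0: "c \<noteq> 0" by (simp add: c_def)
  have "(\<lambda>X::real^'k^'n. (-1/c) * (TT i X UNIV a - c * mono_pow (X $ i) \<delta>)) \<in> Rep i CARD('n)"
    using Rep_cmult[OF L, of "-1/c"] a(2) assms by (simp add: c_def)
  then show ?thesis by (rule Rep_cong) (simp add: T0 c0)
qed

lemma reduce:
  fixes i :: "'n::finite" and \<gamma> :: "'k::finite \<Rightarrow> nat"
  shows "(\<lambda>X::real^'k^'n. mono_pow (X $ i) \<gamma>) \<in> Rep i (Suc CARD('n))"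
proof (induction "deg \<gamma>" arbitrary: \<gamma> rule: less_induct)
  case less
  show ?case
  proof (cases "deg \<gamma> \<le> CARD('n)")
    case True then show ?thesis by (intro Rep_mon) simp
  next
    case False
    then have "0 < deg \<gamma>" by simp
    then obtain c \<gamma>' where g: "\<gamma> = \<gamma>' + unitv c" "deg \<gamma>' = deg \<gamma> - 1" by (rule split_unit)
    have eqX: "mono_pow (X $ i) \<gamma> = mono_pow (X $ i) (unitv c) * mono_pow (X $ i) \<gamma>'" for X :: "real^'k^'n"
      by (simp add: g(1) mono_pow_add mult.commute)
    show ?thesis
    proof (cases "deg \<gamma>' = CARD('n)")
      case True
      have "(\<lambda>X::real^'k^'n. mono_pow (X $ i) (unitv c) * mono_pow (X $ i) \<gamma>') \<in> Rep i (CARD('n) + deg (unitv c))"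
        by (rule Rep_shift[OF base[OF True]])
      then have "(\<lambda>X::real^'k^'n. mono_pow (X $ i) (unitv c) * mono_pow (X $ i) \<gamma>') \<in> Rep i (Suc CARD('n))"
        by (simp add: deg_unitv)
      then show ?thesis by (rule Rep_cong) (simp add: eqX)
    next
      case False
      then have lt: "deg \<gamma>' < deg \<gamma>" and gt: "CARD('n) < deg \<gamma>'"
        using g(2) \<open>\<not> deg \<gamma> \<le> CARD('n)\<close> by auto
      obtain q where q: "\<And>\<alpha>. q \<alpha> \<in> PS"
        "\<And>X. mono_pow (X $ i) \<gamma>' = (\<Sum>\<alpha>\<in>LTs (Suc CARD('n)). mono_pow (X $ i) \<alpha> * q \<alpha> X)"
        by (rule RepE[OF less[OF lt]], rule that, assumption+)
      have "(\<lambda>X. \<Sum>\<alpha>\<in>LTs (Suc CARD('n)). q \<alpha> X * mono_pow (X $ i) (\<alpha> + unitv c)) \<in> Rep i (Suc CARD('n))"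
      proof (rule Rep_sum[OF finite_LTs], rule Rep_scale[OF q(1)])
        fix \<alpha> :: "'k \<Rightarrow> nat" assume "\<alpha> \<in> LTs (Suc CARD('n))"
        then have "deg (\<alpha> + unitv c) < deg \<gamma>" using gt g(2) by (simp add: LTs_def deg_add deg_unitv)
        then show "(\<lambda>X::real^'k^'n. mono_pow (X $ i) (\<alpha> + unitv c)) \<in> Rep i (Suc CARD('n))" by (rule less)
      qed
      then show ?thesis
        by (rule Rep_cong) (simp add: eqX q(2) sum_distrib_left mono_pow_add mult_ac)
    qed
  qed
qed

lemma Rep_mult:
  fixes i :: "'n::finite" and f g :: "real^'k::finite^'n \<Rightarrow> real"
  assumes "f \<in> Rep i (Suc CARD('n))" "g \<in> Rep i (Suc CARD('n))"
  shows "(\<lambda>X. f X * g X) \<in> Rep i (Suc CARD('n))"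
proof -
  obtain q1 where q1: "\<And>\<alpha>. q1 \<alpha> \<in> PS" "\<And>X. f X = (\<Sum>\<alpha>\<in>LTs (Suc CARD('n)). mono_pow (X $ i) \<alpha> * q1 \<alpha> X)"
    by (rule RepE[OF assms(1)], rule that, assumption+)
  obtain q2 where q2: "\<And>\<alpha>. q2 \<alpha> \<in> PS" "\<And>X. g X = (\<Sum>\<alpha>\<in>LTs (Suc CARD('n)). mono_pow (X $ i) \<alpha> * q2 \<alpha> X)"
    by (rule RepE[OF assms(2)], rule that, assumption+)
  have "(\<lambda>X. \<Sum>\<alpha>\<in>LTs (Suc CARD('n)). \<Sum>\<beta>\<in>LTs (Suc CARD('n)). (q1 \<alpha> X * q2 \<beta> X) * mono_pow (X $ i) (\<alpha> + \<beta>))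
      \<in> Rep i (Suc CARD('n))"
    by (intro Rep_sum finite_LTs Rep_scale PS_mult q1(1) q2(1) reduce)
  then show ?thesis
    by (rule Rep_cong) (simp add: q1(2) q2(2) sum_product mono_pow_add mult_ac)
qed

lemma PS_all: "(power_sum \<gamma> :: real^'k::finite^'n::finite \<Rightarrow> real) \<in> PS"
proof -
  define i0 :: 'n where "i0 = undefined"
  obtain q where q: "\<And>\<alpha>. q \<alpha> \<in> PS"
    "\<And>X::real^'k^'n. mono_pow (X $ i0) \<gamma> = (\<Sum>\<alpha>\<in>LTs (Suc CARD('n)). mono_pow (X $ i0) \<alpha> * q \<alpha> X)"
    by (rule RepE[OF reduce], rule that, assumption+)
  have row: "mono_pow (X $ l) \<gamma> = (\<Sum>\<alpha>\<in>LTs (Suc CARD('n)). mono_pow (X $ l) \<alpha> * q \<alpha> X)" for X l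
  proof -
    define \<tau> where "\<tau> = Transposition.transpose i0 l"
    have \<tau>: "\<tau> permutes UNIV" unfolding \<tau>_def by (rule permutes_swap_id) auto
    have inv: "inv \<tau> i0 = l" unfolding permutes_inv_eq[OF \<tau>] by (simp add: \<tau>_def)
    have Y: "perm_rows \<tau> X $ i0 = X $ l" by (simp add: perm_rows_nth inv)
    show ?thesis using q(2)[of "perm_rows \<tau> X"] unfolding Y PS_perm[OF q(1) \<tau>] .
  qed
  have "(\<lambda>X. \<Sum>\<alpha>\<in>LTs (Suc CARD('n)). power_sum \<alpha> X * q \<alpha> X) \<in> PS"
    by (intro PS_sum finite_LTs PS_mult q(1) PS_ps) (simp add: LTs_def)
  then show ?thesis
  proof (rule PS_cong)
    fix X :: "real^'k^'n"
    have "(\<Sum>\<alpha>\<in>LTs (Suc CARD('n)). power_sum \<alpha> X * q \<alpha> X)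
        = (\<Sum>\<alpha>\<in>LTs (Suc CARD('n)). \<Sum>l\<in>UNIV. mono_pow (X $ l) \<alpha> * q \<alpha> X)"
      by (simp add: power_sum_def sum_distrib_right)
    also have "\<dots> = (\<Sum>l\<in>UNIV. mono_pow (X $ l) \<gamma>)" by (subst sum.swap) (simp add: row)
    finally show "(\<Sum>\<alpha>\<in>LTs (Suc CARD('n)). power_sum \<alpha> X * q \<alpha> X) = power_sum \<gamma> X"
      by (simp add: power_sum_def)
  qed
qed


section \<open>Stabilizer-invariant polynomials\<close>

lemma TT_Rep:
  fixes i0 :: "'n::finite" and a :: "'j \<Rightarrow> ('k::finite \<Rightarrow> nat)"
  assumes "finite J"
  shows "(\<lambda>X::real^'k^'n. TT i0 X J a) \<in> Rep i0 (Suc CARD('n))"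
  using assms
proof (induction J arbitrary: a rule: finite_induct)
  case empty
  show ?case by (rule Rep_cong[OF Rep_PS[OF PS_const[of 1]]]) (auto simp: TT_def Tsum_empty)
next
  case (insert z J)
  have "(\<lambda>X::real^'k^'n. TT i0 X J a * (power_sum (a z) X - mono_pow (X $ i0) (a z))
           - (\<Sum>j\<in>J. TT i0 X J (a(j := a j + a z)))) \<in> Rep i0 (Suc CARD('n))"
  proof (rule Rep_diff[OF Rep_mult])
    show "(\<lambda>X::real^'k^'n. TT i0 X J a) \<in> Rep i0 (Suc CARD('n))" by (rule insert(3))
    show "(\<lambda>X::real^'k^'n. power_sum (a z) X - mono_pow (X $ i0) (a z)) \<in> Rep i0 (Suc CARD('n))"
      by (rule Rep_diff[OF Rep_PS[OF PS_all zero_less_Suc] reduce])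
    show "(\<lambda>X::real^'k^'n. \<Sum>j\<in>J. TT i0 X J (a(j := a j + a z))) \<in> Rep i0 (Suc CARD('n))"
      by (rule Rep_sum[OF insert(1)]) (rule insert(3))
  qed
  then show ?case by (rule Rep_cong) (simp add: TT_insert[OF insert(1,2)])
qed

lemma ext_perm:
  fixes i0 :: "'n::finite"
  assumes "\<phi> \<in> Inj (UNIV - {i0}) (UNIV - {i0})"
  shows "(\<lambda>x. if x = i0 then i0 else \<phi> x) permutes UNIV"
proof -
  define e where "e = (\<lambda>x. if x = i0 then i0 else \<phi> x)"
  have P: "\<phi> \<in> (UNIV - {i0}) \<rightarrow>\<^sub>E (UNIV - {i0})" and I: "inj_on \<phi> (UNIV - {i0})"
    using assms by (simp_all add: Inj_def)
  have ne: "\<phi> x \<noteq> i0" if "x \<noteq> i0" for x using PiE_mem[OF P, of x] that by blast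
  have "inj e"
  proof (rule injI)
    fix x y assume xy: "e x = e y"
    have ex: "e x = (if x = i0 then i0 else \<phi> x)" and ey: "e y = (if y = i0 then i0 else \<phi> y)"
      by (simp_all add: e_def)
    show "x = y"
    proof (cases "x = i0"; cases "y = i0")
      assume "x = i0" "y = i0" then show ?thesis by simp
    next
      assume "x = i0" "y \<noteq> i0" then show ?thesis using xy ex ey ne[of y] by simp
    next
      assume "x \<noteq> i0" "y = i0" then show ?thesis using xy ex ey ne[of x] by simp
    next
      assume "x \<noteq> i0" "y \<noteq> i0"
      then have "\<phi> x = \<phi> y" using xy ex ey by simp
      then show ?thesis using I \<open>x \<noteq> i0\<close> \<open>y \<noteq> i0\<close> unfolding inj_on_def by blast
    qed
  qed
  then have "surj e" by (intro finite_UNIV_inj_surj) simp_all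
  then have "bij_betw e UNIV UNIV" using \<open>inj e\<close> by (simp add: bij_betw_def)
  then have "e permutes UNIV" by (rule bij_imp_permutes) simp
  then show ?thesis by (simp add: e_def)
qed

lemma stab_sum:
  fixes G :: "'n::finite \<Rightarrow> 'n \<Rightarrow> real" and i0 :: 'n
  shows "(\<Sum>\<sigma>\<in>{\<sigma>. \<sigma> permutes UNIV \<and> \<sigma> i0 = i0}. \<Prod>i\<in>UNIV - {i0}. G (inv \<sigma> i) i)
       = (\<Sum>\<phi>\<in>Inj (UNIV - {i0}) (UNIV - {i0}). \<Prod>i\<in>UNIV - {i0}. G (\<phi> i) i)"
proof (rule sum.reindex_bij_witness[where j="\<lambda>\<sigma>. restrict (inv \<sigma>) (UNIV - {i0})"
      and i="\<lambda>\<phi>. inv (\<lambda>x. if x = i0 then i0 else \<phi> x)"])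
  fix \<sigma> assume "\<sigma> \<in> {\<sigma>. \<sigma> permutes UNIV \<and> \<sigma> i0 = i0}"
  then have \<sigma>: "\<sigma> permutes UNIV" "\<sigma> i0 = i0" by auto
  have inv0: "inv \<sigma> x = i0 \<longleftrightarrow> x = i0" for x using \<sigma> by (auto simp: permutes_inv_eq[OF \<sigma>(1)])
  have e: "(\<lambda>x. if x = i0 then i0 else restrict (inv \<sigma>) (UNIV - {i0}) x) = inv \<sigma>"
  proof -
    have "inv \<sigma> i0 = i0" using inv0 by blast
    then show ?thesis by (auto simp: fun_eq_iff)
  qed
  show "inv (\<lambda>x. if x = i0 then i0 else restrict (inv \<sigma>) (UNIV - {i0}) x) = \<sigma>"
    unfolding e by (rule permutes_inv_inv[OF \<sigma>(1)])
  have "inj (inv \<sigma>)" using permutes_inj[OF permutes_inv[OF \<sigma>(1)]] .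
  then show "restrict (inv \<sigma>) (UNIV - {i0}) \<in> Inj (UNIV - {i0}) (UNIV - {i0})"
    using inv0 unfolding Inj_def by (auto simp: PiE_iff inj_on_def)
  show "(\<Prod>i\<in>UNIV - {i0}. G (restrict (inv \<sigma>) (UNIV - {i0}) i) i) = (\<Prod>i\<in>UNIV - {i0}. G (inv \<sigma> i) i)"
    by (intro prod.cong) auto
next
  fix \<phi> assume \<phi>: "\<phi> \<in> Inj (UNIV - {i0}) (UNIV - {i0})"
  have p: "(\<lambda>x. if x = i0 then i0 else \<phi> x) permutes UNIV" by (rule ext_perm[OF \<phi>])
  have ext: "\<phi> \<in> extensional (UNIV - {i0})" using \<phi> by (auto simp: Inj_def PiE_def)
  show "restrict (inv (inv (\<lambda>x. if x = i0 then i0 else \<phi> x))) (UNIV - {i0}) = \<phi>"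
    unfolding permutes_inv_inv[OF p] using ext by (auto simp: fun_eq_iff extensional_def)
  have "inv (\<lambda>x. if x = i0 then i0 else \<phi> x) i0 = i0" unfolding permutes_inv_eq[OF p] by simp
  then show "inv (\<lambda>x. if x = i0 then i0 else \<phi> x) \<in> {\<sigma>. \<sigma> permutes UNIV \<and> \<sigma> i0 = i0}"
    using permutes_inv[OF p] by auto
qed

lemma stab_Rep:
  fixes f :: "real^'k::finite^'n::finite \<Rightarrow> real" and i0 :: 'n
  assumes poly: "poly_fun (UNIV::('n\<times>'k) set) (\<lambda>y. f (\<chi> i r. y (i, r)))"
    and inv: "\<And>\<sigma> X. \<sigma> permutes UNIV \<Longrightarrow> \<sigma> i0 = i0 \<Longrightarrow> f (perm_rows \<sigma> X) = f X"
  shows "f \<in> Rep i0 (Suc CARD('n))"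
proof -
  obtain M c where M: "finite (UNIV::('n\<times>'k) set)" "finite M" "\<And>m v. m \<in> M \<Longrightarrow> v \<notin> UNIV \<Longrightarrow> m v = 0"
    "\<And>y. f (\<chi> i r. y (i, r)) = (\<Sum>m\<in>M. c m * (\<Prod>v\<in>UNIV. y v ^ m v))"
    by (rule poly_funE[OF poly], rule that, assumption+)
  define S where "S = {\<sigma>::'n\<Rightarrow>'n. \<sigma> permutes UNIV \<and> \<sigma> i0 = i0}"
  have finS: "finite S" unfolding S_def
    by (rule finite_subset[OF _ finite_permutations[of "UNIV::'n set"]]) auto
  have "id \<in> S" by (simp add: S_def)
  then have cardS: "card S \<noteq> 0" using finS by auto
  define B where "B = UNIV - {i0}"
  define mi where "mi m i = (\<lambda>r. m (i, r))" for m :: "'n \<times> 'k \<Rightarrow> nat" and i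
  have fX: "f X = (\<Sum>m\<in>M. c m * (\<Prod>i\<in>UNIV. mono_pow (X $ i) (mi m i)))" for X
  proof -
    have "f X = f (\<chi> i r. (\<lambda>(i, r). X $ i $ r) (i, r))" by simp
    also have "\<dots> = (\<Sum>m\<in>M. c m * (\<Prod>v\<in>UNIV. ((\<lambda>(i, r). X $ i $ r) v) ^ m v))" by (rule M(4))
    also have "\<dots> = (\<Sum>m\<in>M. c m * (\<Prod>i\<in>UNIV. mono_pow (X $ i) (mi m i)))"
    proof (rule sum.cong[OF refl])
      fix m
      have "(\<Prod>v\<in>UNIV. ((\<lambda>(i, r). X $ i $ r) v) ^ m v) = (\<Prod>v\<in>UNIV \<times> UNIV. ((\<lambda>(i, r). X $ i $ r) v) ^ m v)"
        by simp
      also have "\<dots> = (\<Prod>i\<in>UNIV. \<Prod>r\<in>UNIV. (X $ i $ r) ^ m (i, r))"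
        unfolding prod.cartesian_product by (rule prod.cong) auto
      finally show "c m * (\<Prod>v\<in>UNIV. ((\<lambda>(i, r). X $ i $ r) v) ^ m v) = c m * (\<Prod>i\<in>UNIV. mono_pow (X $ i) (mi m i))"
        by (simp add: mono_pow_def mi_def)
    qed
    finally show ?thesis .
  qed
  define E where "E X = (1 / card S) * (\<Sum>m\<in>M. c m * (mono_pow (X $ i0) (mi m i0) * TT i0 X B (mi m)))"
    for X :: "real^'k^'n"
  have TTR: "(\<lambda>X. TT i0 X B (mi m)) \<in> Rep i0 (Suc CARD('n))" for m
    unfolding B_def by (rule TT_Rep) simp
  have "(\<lambda>X. (1 / card S) * (\<Sum>m\<in>M. c m * (mono_pow (X $ i0) (mi m i0) * TT i0 X B (mi m))))
      \<in> Rep i0 (Suc CARD('n))"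
    by (rule Rep_cmult, rule Rep_sum[OF M(2)], rule Rep_cmult, rule Rep_mult[OF reduce TTR])
  then have "E \<in> Rep i0 (Suc CARD('n))" unfolding E_def .
  moreover have "E X = f X" for X
  proof -
    have "(\<Sum>\<sigma>\<in>S. f (perm_rows \<sigma> X)) = (\<Sum>\<sigma>\<in>S. f X)"
      by (intro sum.cong refl) (auto simp: S_def inv)
    then have 1: "f X = (1 / card S) * (\<Sum>\<sigma>\<in>S. f (perm_rows \<sigma> X))" using cardS by simp
    have 2: "(\<Prod>i\<in>UNIV. mono_pow (X $ inv \<sigma> i) (mi m i))
        = mono_pow (X $ i0) (mi m i0) * (\<Prod>i\<in>B. mono_pow (X $ inv \<sigma> i) (mi m i))"
      if "\<sigma> \<in> S" for \<sigma> m
    proof -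
      have "inv \<sigma> i0 = i0" using that unfolding S_def by (auto simp: permutes_inv_eq)
      then show ?thesis unfolding B_def by (simp add: prod.remove[of UNIV i0])
    qed
    have "(\<Sum>\<sigma>\<in>S. f (perm_rows \<sigma> X))
        = (\<Sum>\<sigma>\<in>S. \<Sum>m\<in>M. c m * (mono_pow (X $ i0) (mi m i0) * (\<Prod>i\<in>B. mono_pow (X $ inv \<sigma> i) (mi m i))))"
      by (intro sum.cong refl) (simp add: fX perm_rows_nth 2)
    also have "\<dots> = (\<Sum>m\<in>M. c m * (mono_pow (X $ i0) (mi m i0) * (\<Sum>\<sigma>\<in>S. \<Prod>i\<in>B. mono_pow (X $ inv \<sigma> i) (mi m i))))"
      by (subst sum.swap) (simp add: sum_distrib_left)
    also have "\<dots> = (\<Sum>m\<in>M. c m * (mono_pow (X $ i0) (mi m i0) * TT i0 X B (mi m)))"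
      unfolding TT_def Tsum_def S_def B_def
      by (intro sum.cong refl arg_cong2[where f="(*)"] stab_sum[where G="\<lambda>j i. mono_pow (X $ j) (mi m i)" for m])
    finally show ?thesis using 1 by (simp add: E_def)
  qed
  ultimately show ?thesis by (rule Rep_cong)
qed


lemma forward:
  fixes P :: "real^'k::finite^'n::finite \<Rightarrow> real^'l::finite^'n"
  assumes pm: "poly_map P" and eq: "perm_equivariant P"
  shows "power_sum_form P"
proof -
  define i0 :: 'n where "i0 = undefined"
  have perm: "P (perm_rows \<sigma> X) = perm_rows \<sigma> (P X)" if "\<sigma> permutes UNIV" for \<sigma> X
    using eq that unfolding perm_equivariant_def by blast
  have "\<forall>j. \<exists>q. (\<forall>\<alpha>. q \<alpha> \<in> PS) \<and>
      (\<forall>X. P X $ i0 $ j = (\<Sum>\<alpha>\<in>LTs (Suc CARD('n)). mono_pow (X $ i0) \<alpha> * q \<alpha> X))"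
  proof
    fix j
    have "(\<lambda>X. P X $ i0 $ j) \<in> Rep i0 (Suc CARD('n))"
    proof (rule stab_Rep)
      show "poly_fun UNIV (\<lambda>y. P (\<chi> i r. y (i, r)) $ i0 $ j)"
        using pm unfolding poly_map_def by blast
      fix \<sigma> X assume \<sigma>: "\<sigma> permutes (UNIV::'n set)" "\<sigma> i0 = i0"
      have "inv \<sigma> i0 = i0" using \<sigma> by (simp add: permutes_inv_eq[OF \<sigma>(1)])
      then show "P (perm_rows \<sigma> X) $ i0 $ j = P X $ i0 $ j" by (simp add: perm[OF \<sigma>(1)] perm_rows_nth)
    qed
    then show "\<exists>q. (\<forall>\<alpha>. q \<alpha> \<in> PS) \<and>
      (\<forall>X. P X $ i0 $ j = (\<Sum>\<alpha>\<in>LTs (Suc CARD('n)). mono_pow (X $ i0) \<alpha> * q \<alpha> X))"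
      unfolding Rep_def by blast
  qed
  then obtain qq where qq: "\<forall>j. (\<forall>\<alpha>. qq j \<alpha> \<in> PS) \<and>
      (\<forall>X. P X $ i0 $ j = (\<Sum>\<alpha>\<in>LTs (Suc CARD('n)). mono_pow (X $ i0) \<alpha> * qq j \<alpha> X))"
    by metis
  have "\<forall>\<alpha> j. \<exists>Q. poly_fun (multi_indices CARD('n)) Q \<and> (\<forall>X. qq j \<alpha> X = Q (\<lambda>\<beta>. power_sum \<beta> X))"
    using qq unfolding PS_def by blast
  then obtain QQ where QQ: "\<forall>\<alpha> j. poly_fun (multi_indices CARD('n)) (QQ \<alpha> j) \<and>
      (\<forall>X. qq j \<alpha> X = QQ \<alpha> j (\<lambda>\<beta>. power_sum \<beta> X))"
    by metis
  have row: "P X $ i $ j = (\<Sum>\<alpha>\<in>LTs (Suc CARD('n)). mono_pow (X $ i) \<alpha> * qq j \<alpha> X)" for X i j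
  proof -
    define \<tau> where "\<tau> = Transposition.transpose i0 i"
    have \<tau>: "\<tau> permutes UNIV" unfolding \<tau>_def by (rule permutes_swap_id) auto
    have inv: "inv \<tau> i0 = i" unfolding permutes_inv_eq[OF \<tau>] by (simp add: \<tau>_def)
    have Y: "perm_rows \<tau> X $ i0 = X $ i" by (simp add: perm_rows_nth inv)
    have "P X $ i $ j = perm_rows \<tau> (P X) $ i0 $ j" by (simp add: perm_rows_nth inv)
    also have "\<dots> = P (perm_rows \<tau> X) $ i0 $ j" by (simp add: perm[OF \<tau>])
    also have "\<dots> = (\<Sum>\<alpha>\<in>LTs (Suc CARD('n)). mono_pow (X $ i) \<alpha> * qq j \<alpha> (perm_rows \<tau> X))"
      using qq Y by simp
    also have "\<dots> = (\<Sum>\<alpha>\<in>LTs (Suc CARD('n)). mono_pow (X $ i) \<alpha> * qq j \<alpha> X)"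
      by (intro sum.cong refl arg_cong2[where f="(*)"] PS_perm[OF _ \<tau>]) (use qq in blast)
    finally show ?thesis .
  qed
  show ?thesis unfolding power_sum_form_def
  proof (intro exI[of _ QQ] conjI allI)
    show "poly_fun (multi_indices CARD('n)) (QQ \<alpha> j)" for \<alpha> j using QQ by blast
    fix X
    show "P X = (\<chi> i j. \<Sum>\<alpha>\<in>multi_indices CARD('n). mono_pow (X $ i) \<alpha> * QQ \<alpha> j (\<lambda>\<beta>. power_sum \<beta> X))"
      using QQ by (simp add: vec_eq_iff row multi_indices_LTs)
  qed
qed

lemma backward:
  fixes P :: "real^'k::finite^'n::finite \<Rightarrow> real^'l::finite^'n"
  assumes "power_sum_form P"
  shows "perm_equivariant P"
proof -
  obtain q :: "('k \<Rightarrow> nat) \<Rightarrow> 'l \<Rightarrow> ((('k \<Rightarrow> nat) \<Rightarrow> real) \<Rightarrow> real)" where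
    q: "\<forall>X. P X = (\<chi> i j. \<Sum>\<alpha>\<in>multi_indices CARD('n).
                     mono_pow (X $ i) \<alpha> * q \<alpha> j (\<lambda>\<beta>. power_sum \<beta> X))"
    using assms unfolding power_sum_form_def by blast
  show ?thesis unfolding perm_equivariant_def
  proof (intro allI impI)
    fix \<sigma> :: "'n \<Rightarrow> 'n" and X :: "real^'k^'n" assume \<sigma>: "\<sigma> permutes UNIV"
    show "P (perm_rows \<sigma> X) = perm_rows \<sigma> (P X)"
      by (simp add: q vec_eq_iff perm_rows_nth power_sum_perm[OF \<sigma>])
  qed
qed

theorem theorem2:
  fixes P :: "real^'k^'n \<Rightarrow> real^'l^'n"
  shows "(poly_map P \<and> perm_equivariant P \<longrightarrow> power_sum_form P) \<and>
         (power_sum_form P \<longrightarrow> perm_equivariant P)"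
  using forward backward by blast

end
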